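(* Fix $K$ and $K_T$ with $0<K_T<K$. Among all partitions $\mathcal{C}$ of $[N]$ into $K$ equally sized clusters, the set of maximizers of $\operatorname{Tr}\big(\operatorname{Var}_{\mathbf{Z}\sim\mathcal{D}(\mathcal{C})}(\mathbf{d})\big)$ equals the set of minimizers of $$\sum_{i\in[N]}\sum_{j\notin\mathcal{C}(i)}\sum_{s\in[M]}\frac{w_{is}}{\sum_{k}w_{ks}}\,\frac{w_{js}}{\sum_{k}w_{ks}},$$ where $\mathbf{d}=(d_1,\dots,d_M)$ and $\operatorname{Var}(\mathbf{d})$ is its covariance matrix.
   Context: Setting: $N$ experimental units $[N]$, $M$ interference units $[M]$, weights $w_{is}\ge0$ with $\sum_i w_{is}>0$ for all $s$. For $\mathbf{Z}\in\{-1,1\}^N$: dose $d_s=\frac{\sum_i w_{is}Z_i}{\sum_i w_{is}}$. Balanced $K$-cluster randomized design $\mathcal{D}(\mathcal{C})$: $K\ge2$ divides $N$, $\mathcal{C}$ partitions $[N]$ into $K$ clusters of size $N/K$, $\mathcal{C}(i)$ is the cluster of $i$; $K_T$ clusters chosen uniformly at random are treated ($Z_i=1$), the rest are control ($Z_i=-1$). *)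

theory Defs
  imports "HOL-Probability.Probability" "HOL-Library.Disjoint_Sets"
begin

text \<open>Experimental units are 0..<N, interference units 0..<M, weights w i s.\<close>

definition colsum :: "nat \<Rightarrow> (nat \<Rightarrow> nat \<Rightarrow> real) \<Rightarrow> nat \<Rightarrow> real" where
  "colsum N w s = (\<Sum>k<N. w k s)"

definition dose :: "nat \<Rightarrow> (nat \<Rightarrow> nat \<Rightarrow> real) \<Rightarrow> (nat \<Rightarrow> real) \<Rightarrow> nat \<Rightarrow> real" where
  "dose N w Z s = (\<Sum>i<N. w i s * Z i) / colsum N w s"

definition balanced_partitions :: "nat \<Rightarrow> nat \<Rightarrow> nat set set set" where
  "balanced_partitions N K =
     {C. partition_on {..<N} C \<and> card C = K \<and> (\<forall>B\<in>C. card B = N div K)}"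

definition cluster_of :: "nat set set \<Rightarrow> nat \<Rightarrow> nat set" where
  "cluster_of C i = (THE B. B \<in> C \<and> i \<in> B)"

definition cluster_design :: "nat set set \<Rightarrow> nat \<Rightarrow> (nat \<Rightarrow> real) pmf" where
  "cluster_design C KT =
     map_pmf (\<lambda>T i. if cluster_of C i \<in> T then 1 else -1)
             (pmf_of_set {T. T \<subseteq> C \<and> card T = KT})"

definition trace_var_dose ::
  "nat \<Rightarrow> nat \<Rightarrow> (nat \<Rightarrow> nat \<Rightarrow> real) \<Rightarrow> nat \<Rightarrow> nat set set \<Rightarrow> real" where
  "trace_var_dose N M w KT C =
     (\<Sum>s<M. measure_pmf.variance (cluster_design C KT) (\<lambda>Z. dose N w Z s))"

definition cross_cluster_weight ::
  "nat \<Rightarrow> nat \<Rightarrow> (nat \<Rightarrow> nat \<Rightarrow> real) \<Rightarrow> nat set set \<Rightarrow> real" where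
  "cross_cluster_weight N M w C =
     (\<Sum>i<N. \<Sum>j\<in>{..<N} - cluster_of C i. \<Sum>s<M.
        (w i s / colsum N w s) * (w j s / colsum N w s))"

end

theory Submission
  imports Defs
begin

lemma cluster_of_props:
  assumes "partition_on A C" "i \<in> A"
  shows "cluster_of C i \<in> C \<and> i \<in> cluster_of C i"
proof -
  have ex: "\<exists>B. B \<in> C \<and> i \<in> B" using partition_onD1[OF assms(1)] assms(2) by blast
  have un: "B = B'" if "B \<in> C" "i \<in> B" "B' \<in> C" "i \<in> B'" for B B'
    using partition_onD2[OF assms(1)] that by (meson disjointD disjoint_iff)
  have "\<exists>!B. B \<in> C \<and> i \<in> B" using ex un by blast
  from theI'[OF this] show ?thesis unfolding cluster_of_def .
qed

lemma cluster_of_eq: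
  assumes "partition_on A C" "B \<in> C" "i \<in> B"
  shows "cluster_of C i = B"
proof -
  have iA: "i \<in> A" using partition_onD1[OF assms(1)] assms by blast
  note p = cluster_of_props[OF assms(1) iA]
  show ?thesis using partition_onD2[OF assms(1)] p assms(2,3) by (meson disjointD disjoint_iff)
qed

lemma cluster_same_iff:
  assumes "partition_on A C" "i \<in> A" "j \<in> A"
  shows "(j \<in> cluster_of C i) \<longleftrightarrow> cluster_of C j = cluster_of C i"
  using cluster_of_props[OF assms(1,2)] cluster_of_props[OF assms(1,3)] cluster_of_eq[OF assms(1)]
  by metis

lemma card_ins:
  assumes "finite C" "B \<notin> C"
  shows "card {T. T \<subseteq> insert B C \<and> card T = Suc k \<and> B \<in> T} = card C choose k"
proof -
  have "{T. T \<subseteq> insert B C \<and> card T = Suc k \<and> B \<in> T} = insert B ` {T. T \<subseteq> C \<and> card T = k}"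
  proof (rule set_eqI, rule iffI)
    fix T assume "T \<in> {T. T \<subseteq> insert B C \<and> card T = Suc k \<and> B \<in> T}"
    hence T: "T \<subseteq> insert B C" "card T = Suc k" "B \<in> T" by auto
    have fin: "finite T" using T(1) assms(1) finite_subset by blast
    have "T - {B} \<subseteq> C" using T by auto
    moreover have "card (T - {B}) = k" using T fin by simp
    moreover have "T = insert B (T - {B})" using T by auto
    ultimately show "T \<in> insert B ` {T. T \<subseteq> C \<and> card T = k}" by blast
  next
    fix T assume "T \<in> insert B ` {T. T \<subseteq> C \<and> card T = k}"
    then obtain U where U: "U \<subseteq> C" "card U = k" "T = insert B U" by auto
    have "finite U" using U assms finite_subset by blast
    moreover have "B \<notin> U" using U assms by auto
    ultimately show "T \<in> {T. T \<subseteq> insert B C \<and> card T = Suc k \<and> B \<in> T}" using U by auto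
  qed
  moreover have "inj_on (insert B) {T. T \<subseteq> C \<and> card T = k}"
  proof (rule inj_onI)
    fix U V assume "U \<in> {T. T \<subseteq> C \<and> card T = k}" "V \<in> {T. T \<subseteq> C \<and> card T = k}" "insert B U = insert B V"
    thus "U = V" using assms(2) by (metis Diff_insert_absorb mem_Collect_eq subsetD)
  qed
  ultimately show ?thesis using card_image n_subsets[OF assms(1)] by metis
qed

lemma card_in:
  assumes "finite C" "B \<in> C" "0 < k"
  shows "card {T. T \<subseteq> C \<and> card T = k \<and> B \<in> T} = (card C - 1) choose (k - 1)"
proof -
  have C: "C = insert B (C - {B})" using assms by auto
  have k: "k = Suc (k - 1)" using assms by simp
  have "card {T. T \<subseteq> insert B (C - {B}) \<and> card T = Suc (k - 1) \<and> B \<in> T} = card (C - {B}) choose (k - 1)"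
    by (rule card_ins) (use assms in auto)
  thus ?thesis using C k assms by (metis card_Diff_singleton)
qed

lemma card_in_out:
  assumes "finite C" "B \<in> C" "B' \<in> C" "B \<noteq> B'" "0 < k"
  shows "card {T. T \<subseteq> C \<and> card T = k \<and> B \<in> T \<and> B' \<notin> T} = (card C - 2) choose (k - 1)"
proof -
  have e: "{T. T \<subseteq> C \<and> card T = k \<and> B \<in> T \<and> B' \<notin> T}
      = {T. T \<subseteq> insert B (C - {B, B'}) \<and> card T = Suc (k - 1) \<and> B \<in> T}"
    using assms by auto
  have "card {T. T \<subseteq> insert B (C - {B, B'}) \<and> card T = Suc (k - 1) \<and> B \<in> T} = card (C - {B, B'}) choose (k - 1)"
    by (rule card_ins) (use assms in auto)
  moreover have "card (C - {B, B'}) = card C - 2" using assms by (simp add: card_Diff_subset)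
  ultimately show ?thesis using e by simp
qed


definition mu :: "nat \<Rightarrow> nat \<Rightarrow> real" where
  "mu K KT = (2 * real ((K - 1) choose (KT - 1)) - real (K choose KT)) / real (K choose KT)"

definition rho :: "nat \<Rightarrow> nat \<Rightarrow> real" where
  "rho K KT = (real (K choose KT) - 4 * real ((K - 2) choose (KT - 1))) / real (K choose KT)"

lemma sum_Y:
  assumes "finite C" "card C = K" "B \<in> C" "0 < KT"
  shows "(\<Sum>T\<in>{T. T \<subseteq> C \<and> card T = KT}. (if B \<in> T then 1 else -1 :: real))
     = 2 * real ((K - 1) choose (KT - 1)) - real (K choose KT)"
proof -
  let ?S = "{T. T \<subseteq> C \<and> card T = KT}"
  have fin: "finite ?S" using assms(1) by simp
  have "(\<Sum>T\<in>?S. (if B \<in> T then 1 else -1 :: real)) = (\<Sum>T\<in>?S. 2 * of_bool (B \<in> T) - 1)"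
    by (rule sum.cong) auto
  also have "\<dots> = 2 * (\<Sum>T\<in>?S. of_bool (B \<in> T)) - real (card ?S)"
    by (simp add: sum_subtractf sum_distrib_left)
  also have "(\<Sum>T\<in>?S. of_bool (B \<in> T) :: real) = real (card (?S \<inter> {T. B \<in> T}))"
    by (rule sum_of_bool_eq[OF fin fin, where P="\<lambda>T. B \<in> T"])
  also have "?S \<inter> {T. B \<in> T} = {T. T \<subseteq> C \<and> card T = KT \<and> B \<in> T}" by auto
  also have "card \<dots> = (K - 1) choose (KT - 1)" using card_in[OF assms(1,3,4)] assms(2) by simp
  also have "card ?S = K choose KT" using n_subsets[OF assms(1)] assms(2) by simp
  finally show ?thesis .
qed

lemma sum_YY:
  assumes "finite C" "card C = K" "B \<in> C" "B' \<in> C" "B \<noteq> B'" "0 < KT"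
  shows "(\<Sum>T\<in>{T. T \<subseteq> C \<and> card T = KT}. (if B \<in> T then 1 else -1 :: real) * (if B' \<in> T then 1 else -1))
     = real (K choose KT) - 4 * real ((K - 2) choose (KT - 1))"
proof -
  let ?S = "{T. T \<subseteq> C \<and> card T = KT}"
  have fin: "finite ?S" using assms(1) by simp
  have "(\<Sum>T\<in>?S. (if B \<in> T then 1 else -1 :: real) * (if B' \<in> T then 1 else -1))
      = (\<Sum>T\<in>?S. 1 - 2 * of_bool (B \<in> T \<and> B' \<notin> T) - 2 * of_bool (B' \<in> T \<and> B \<notin> T))"
    by (rule sum.cong) auto
  also have "\<dots> = real (card ?S) - 2 * (\<Sum>T\<in>?S. of_bool (B \<in> T \<and> B' \<notin> T))
        - 2 * (\<Sum>T\<in>?S. of_bool (B' \<in> T \<and> B \<notin> T))"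
    by (simp add: sum_subtractf sum_distrib_left)
  also have "(\<Sum>T\<in>?S. of_bool (B \<in> T \<and> B' \<notin> T) :: real) = real (card (?S \<inter> {T. B \<in> T \<and> B' \<notin> T}))"
    by (rule sum_of_bool_eq[OF fin fin, where P="\<lambda>T. B \<in> T \<and> B' \<notin> T"])
  also have "?S \<inter> {T. B \<in> T \<and> B' \<notin> T} = {T. T \<subseteq> C \<and> card T = KT \<and> B \<in> T \<and> B' \<notin> T}" by auto
  also have "card \<dots> = (K - 2) choose (KT - 1)" using card_in_out[OF assms(1,3,4,5,6)] assms(2) by simp
  also have "(\<Sum>T\<in>?S. of_bool (B' \<in> T \<and> B \<notin> T) :: real) = real (card (?S \<inter> {T. B' \<in> T \<and> B \<notin> T}))"
    by (rule sum_of_bool_eq[OF fin fin, where P="\<lambda>T. B' \<in> T \<and> B \<notin> T"])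
  also have "?S \<inter> {T. B' \<in> T \<and> B \<notin> T} = {T. T \<subseteq> C \<and> card T = KT \<and> B' \<in> T \<and> B \<notin> T}" by auto
  also have "card \<dots> = (K - 2) choose (KT - 1)" using card_in_out[OF assms(1,4,3) _ assms(6)] assms(2,5) by simp
  also have "card ?S = K choose KT" using n_subsets[OF assms(1)] assms(2) by simp
  finally show ?thesis by simp
qed

lemma var_sum:
  fixes g :: "'a \<Rightarrow> real"
  assumes "finite S" "card S > 0"
  shows "(\<Sum>x\<in>S. (g x - (\<Sum>y\<in>S. g y) / card S)\<^sup>2) / card S
       = (\<Sum>x\<in>S. (g x)\<^sup>2) / card S - ((\<Sum>y\<in>S. g y) / card S)\<^sup>2"
proof -
  define m where "m = (\<Sum>y\<in>S. g y) / card S"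
  have sg: "(\<Sum>y\<in>S. g y) = card S * m" using assms by (simp add: m_def)
  have "(\<Sum>x\<in>S. (g x - m)\<^sup>2) = (\<Sum>x\<in>S. (g x)\<^sup>2 - 2 * m * g x + m\<^sup>2)"
    by (rule sum.cong) (auto simp: power2_diff)
  also have "\<dots> = (\<Sum>x\<in>S. (g x)\<^sup>2) - 2 * m * (\<Sum>x\<in>S. g x) + card S * m\<^sup>2"
    by (simp add: sum.distrib sum_subtractf sum_distrib_left)
  finally have "(\<Sum>x\<in>S. (g x - m)\<^sup>2) = (\<Sum>x\<in>S. (g x)\<^sup>2) - card S * m\<^sup>2"
    using sg by (simp add: power2_eq_square)
  hence "(\<Sum>x\<in>S. (g x - m)\<^sup>2) / card S = (\<Sum>x\<in>S. (g x)\<^sup>2) / card S - m\<^sup>2"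
    using assms by (auto simp: diff_divide_distrib)
  thus ?thesis unfolding m_def .
qed


lemma var_s:
  assumes P: "partition_on {..<N} C" and cK: "card C = K" and K2: "2 \<le> K"
    and KT: "0 < KT" "KT < K" and cs: "0 < colsum N w s"
  shows "measure_pmf.variance (cluster_design C KT) (\<lambda>Z. dose N w Z s)
    = 1 - (mu K KT)\<^sup>2 - (1 - rho K KT) *
      (\<Sum>i<N. \<Sum>j\<in>{..<N} - cluster_of C i. (w i s / colsum N w s) * (w j s / colsum N w s))"
proof -
  have finC: "finite C" using cK K2 by (metis card.infinite not_numeral_le_zero)
  define S where "S = {T. T \<subseteq> C \<and> card T = KT}"
  have cS: "card S = K choose KT" using n_subsets[OF finC] cK unfolding S_def by simp
  have cSpos: "card S > 0" using cS KT by simp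
  hence finS: "finite S" and Sne: "S \<noteq> {}" using card_gt_0_iff by blast+
  define Y where "Y i T = (if cluster_of C i \<in> T then 1 else -1 :: real)" for i T
  define a where "a i = w i s / colsum N w s" for i
  have suma: "(\<Sum>i<N. a i) = 1" using cs unfolding a_def colsum_def
    by (simp add: sum_divide_distrib[symmetric])
  define g where "g T = (\<Sum>i<N. a i * Y i T)" for T
  have dose_eq: "dose N w (\<lambda>i. if cluster_of C i \<in> T then 1 else -1) s = g T" for T
    unfolding dose_def g_def a_def Y_def by (simp add: sum_divide_distrib)
  have var: "measure_pmf.variance (cluster_design C KT) (\<lambda>Z. dose N w Z s)
     = (\<Sum>T\<in>S. (g T - (\<Sum>T\<in>S. g T) / card S)\<^sup>2) / card S"
    unfolding cluster_design_def S_def[symmetric]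
    by (simp add: integral_pmf_of_set[OF Sne finS] dose_eq)
  have cl: "cluster_of C i \<in> C" if "i < N" for i
    using cluster_of_props[OF P] that by simp
  have EY: "(\<Sum>T\<in>S. Y i T) / card S = mu K KT" if "i < N" for i
    using sum_Y[OF finC cK cl[OF that] KT(1)] cS unfolding mu_def Y_def S_def by simp
  have EYY: "(\<Sum>T\<in>S. Y i T * Y j T) / card S
      = (if cluster_of C i = cluster_of C j then 1 else rho K KT)" if "i < N" "j < N" for i j
  proof (cases "cluster_of C i = cluster_of C j")
    case True
    have "(\<Sum>T\<in>S. Y i T * Y j T) = (\<Sum>T\<in>S. 1)" by (rule sum.cong) (auto simp: Y_def True)
    thus ?thesis using True cSpos by simp
  next
    case False
    show ?thesis using sum_YY[OF finC cK cl[OF that(1)] cl[OF that(2)] False KT(1)] cS False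
      unfolding rho_def Y_def S_def by simp
  qed
  have m: "(\<Sum>T\<in>S. g T) / card S = mu K KT"
  proof -
    have "(\<Sum>T\<in>S. g T) = (\<Sum>i<N. a i * (\<Sum>T\<in>S. Y i T))"
      unfolding g_def by (simp add: sum_distrib_left sum.swap[of _ S])
    hence "(\<Sum>T\<in>S. g T) / card S = (\<Sum>i<N. a i * ((\<Sum>T\<in>S. Y i T) / card S))"
      by (simp only: sum_divide_distrib[of _ "{..<N}"] times_divide_eq_right)
    also have "\<dots> = (\<Sum>i<N. a i * mu K KT)" by (rule sum.cong) (auto simp: EY)
    also have "\<dots> = mu K KT" using suma by (simp add: sum_distrib_right[symmetric])
    finally show ?thesis .
  qed
  have g2: "(\<Sum>T\<in>S. (g T)\<^sup>2) / card S
     = (\<Sum>i<N. \<Sum>j<N. a i * a j * (if cluster_of C i = cluster_of C j then 1 else rho K KT))"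
  proof -
    have "(\<Sum>T\<in>S. (g T)\<^sup>2) = (\<Sum>T\<in>S. \<Sum>i<N. \<Sum>j<N. a i * a j * (Y i T * Y j T))"
      unfolding g_def power2_eq_square sum_product by (simp add: algebra_simps)
    also have "\<dots> = (\<Sum>i<N. \<Sum>j<N. \<Sum>T\<in>S. a i * a j * (Y i T * Y j T))"
      by (simp add: sum.swap[of _ S])
    also have "\<dots> = (\<Sum>i<N. \<Sum>j<N. a i * a j * (\<Sum>T\<in>S. Y i T * Y j T))"
      by (simp add: sum_distrib_left)
    finally have "(\<Sum>T\<in>S. (g T)\<^sup>2) / card S
        = (\<Sum>i<N. \<Sum>j<N. a i * a j * ((\<Sum>T\<in>S. Y i T * Y j T) / card S))"
      by (simp only: sum_divide_distrib[of _ "{..<N}"] times_divide_eq_right)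
    also have "\<dots> = (\<Sum>i<N. \<Sum>j<N. a i * a j * (if cluster_of C i = cluster_of C j then 1 else rho K KT))"
      by (intro sum.cong refl) (simp add: EYY)
    finally show ?thesis .
  qed
  have inner: "(\<Sum>j<N. a i * a j * (if cluster_of C i = cluster_of C j then 1 else rho K KT))
      = (\<Sum>j<N. a i * a j) - (1 - rho K KT) * (\<Sum>j\<in>{..<N} - cluster_of C i. a i * a j)"
    if "i < N" for i
  proof -
    have e: "{..<N} - cluster_of C i = {j \<in> {..<N}. cluster_of C j \<noteq> cluster_of C i}"
      using cluster_same_iff[OF P, of i] that by auto
    have "(\<Sum>j\<in>{..<N} - cluster_of C i. a i * a j)
        = (\<Sum>j<N. if cluster_of C j \<noteq> cluster_of C i then a i * a j else 0)"
      unfolding e by (rule sum.inter_filter) simp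
    moreover have "(\<Sum>j<N. a i * a j * (if cluster_of C i = cluster_of C j then 1 else rho K KT))
        = (\<Sum>j<N. a i * a j - (1 - rho K KT) * (if cluster_of C j \<noteq> cluster_of C i then a i * a j else 0))"
      by (rule sum.cong) (auto simp: algebra_simps)
    ultimately show ?thesis by (simp add: sum_subtractf sum_distrib_left)
  qed
  have split: "(\<Sum>i<N. \<Sum>j<N. a i * a j * (if cluster_of C i = cluster_of C j then 1 else rho K KT))
      = 1 - (1 - rho K KT) * (\<Sum>i<N. \<Sum>j\<in>{..<N} - cluster_of C i. a i * a j)"
  proof -
    have "(\<Sum>i<N. \<Sum>j<N. a i * a j * (if cluster_of C i = cluster_of C j then 1 else rho K KT))
       = (\<Sum>i<N. (\<Sum>j<N. a i * a j) - (1 - rho K KT) * (\<Sum>j\<in>{..<N} - cluster_of C i. a i * a j))"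
      by (rule sum.cong) (auto simp: inner)
    also have "\<dots> = (\<Sum>i<N. \<Sum>j<N. a i * a j) - (1 - rho K KT) * (\<Sum>i<N. \<Sum>j\<in>{..<N} - cluster_of C i. a i * a j)"
      by (simp add: sum_subtractf sum_distrib_left)
    also have "(\<Sum>i<N. \<Sum>j<N. a i * a j) = 1"
      using suma by (simp add: sum_product[symmetric])
    finally show ?thesis .
  qed
  show ?thesis
    unfolding var unfolding var_sum[OF finS cSpos] unfolding g2 unfolding split unfolding m unfolding a_def by simp
qed


lemma trace_formula:
  assumes C: "C \<in> balanced_partitions N K" and K2: "2 \<le> K"
    and KT: "0 < KT" "KT < K"
    and pos: "\<And>s. s < M \<Longrightarrow> 0 < (\<Sum>i<N. w i s)"
  shows "trace_var_dose N M w KT C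
    = real M * (1 - (mu K KT)\<^sup>2) - (1 - rho K KT) * cross_cluster_weight N M w C"
proof -
  have P: "partition_on {..<N} C" and cK: "card C = K" using C unfolding balanced_partitions_def by auto
  have "trace_var_dose N M w KT C = (\<Sum>s<M. 1 - (mu K KT)\<^sup>2 - (1 - rho K KT) *
      (\<Sum>i<N. \<Sum>j\<in>{..<N} - cluster_of C i. (w i s / colsum N w s) * (w j s / colsum N w s)))"
    unfolding trace_var_dose_def
    by (rule sum.cong[OF refl], rule var_s[OF P cK K2 KT]) (use pos in \<open>simp add: colsum_def\<close>)
  also have "\<dots> = real M * (1 - (mu K KT)\<^sup>2) - (1 - rho K KT) * (\<Sum>s<M.
      (\<Sum>i<N. \<Sum>j\<in>{..<N} - cluster_of C i. (w i s / colsum N w s) * (w j s / colsum N w s)))"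
    by (simp add: sum_subtractf sum_distrib_left)
  also have "(\<Sum>s<M. (\<Sum>i<N. \<Sum>j\<in>{..<N} - cluster_of C i. (w i s / colsum N w s) * (w j s / colsum N w s)))
      = cross_cluster_weight N M w C"
    unfolding cross_cluster_weight_def
    by (simp add: sum.swap[of _ "{..<M}"])
  finally show ?thesis .
qed

lemma rho_lt: assumes "0 < KT" "KT < K" shows "rho K KT < 1"
proof -
  have "0 < (K - 2) choose (KT - 1)" using assms by simp
  moreover have "0 < K choose KT" using assms by simp
  ultimately show ?thesis unfolding rho_def by (simp add: field_simps)
qed

theorem mainTheorem8:
  fixes N M K KT :: nat and w :: "nat \<Rightarrow> nat \<Rightarrow> real"
  assumes "2 \<le> K" and "K dvd N"
    and "0 < KT" and "KT < K"
    and "\<And>i s. i < N \<Longrightarrow> s < M \<Longrightarrow> 0 \<le> w i s"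
    and "\<And>s. s < M \<Longrightarrow> 0 < (\<Sum>i<N. w i s)"
  shows "{C \<in> balanced_partitions N K. \<forall>C' \<in> balanced_partitions N K.
            trace_var_dose N M w KT C' \<le> trace_var_dose N M w KT C}
       = {C \<in> balanced_partitions N K. \<forall>C' \<in> balanced_partitions N K.
            cross_cluster_weight N M w C \<le> cross_cluster_weight N M w C'}"
proof -
  have r: "0 < 1 - rho K KT" using rho_lt[OF assms(3,4)] by simp
  have tf: "\<And>C. C \<in> balanced_partitions N K \<Longrightarrow> trace_var_dose N M w KT C
    = real M * (1 - (mu K KT)\<^sup>2) - (1 - rho K KT) * cross_cluster_weight N M w C"
    by (rule trace_formula[OF _ assms(1,3,4)]) (use assms(6) in auto)
  have iff: "trace_var_dose N M w KT C' \<le> trace_var_dose N M w KT C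
      \<longleftrightarrow> cross_cluster_weight N M w C \<le> cross_cluster_weight N M w C'"
    if "C \<in> balanced_partitions N K" "C' \<in> balanced_partitions N K" for C C'
    using tf[OF that(1)] tf[OF that(2)] r by (simp add: mult_le_cancel_left_pos)
  show ?thesis using iff by blast
qed

end
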